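(* Let $\psi_u\in(0,2\pi)$ satisfy $t\mu\notin\mathbb Z$, where $t=\frac34-\frac{\psi_u}{2\pi}$, and let $\psi_{\tilde u}\in\mathbb R$ be arbitrary. Then $$Y_{\tilde u}=\frac{\zeta_{\tilde u}\sin^2\!\big(\psi_{\tilde u}-\frac{\pi}{\mu}+\frac{2\pi}{\mu}\lceil t\mu\rceil\big)}{V^2},\qquad V=\frac{\sin(\pi/\mu)}{W}.$$
   Context: Setup: Let $W\ge 1$ be an integer and $\mu\ge 2$ an even integer, and set $K=\mu W+1$. Let $\zeta_u>0$, $\psi_u\in(0,2\pi)$, and for $k=1,\dots,K$ let $h_{u,k}=\zeta_u^{1/2}e^{j(\psi_u+2\pi(k-1)/\mu)}$, where $j=\sqrt{-1}$. Let $\mathcal K_1=\{k\in\{2,\dots,K\}:\operatorname{Re}(h_{u,k})>0\}$. For an interfering user $\tilde u$ with $\zeta_{\tilde u}>0$ and phase $\psi_{\tilde u}$, let $h_{\tilde u,k}=\zeta_{\tilde u}^{1/2}e^{j(\psi_{\tilde u}+2\pi(k-1)/\mu)}$ and $Y_{\tilde u}=\big(\sum_{k\in\mathcal K_1}\operatorname{Re}(h_{\tilde u,k})\big)^2$. *)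

theory Defs
  imports Complex_Main
begin

definition chan :: "real \<Rightarrow> real \<Rightarrow> nat \<Rightarrow> nat \<Rightarrow> complex" where
  "chan \<zeta> \<psi> \<mu> k =
     complex_of_real (sqrt \<zeta>) * exp (\<i> * complex_of_real (\<psi> + 2 * pi * (real k - 1) / real \<mu>))"

text \<open>K_1 = {k in {2..K} : Re(h_{u,k}) > 0}, with K = mu W + 1.\<close>
definition K1 :: "nat \<Rightarrow> nat \<Rightarrow> real \<Rightarrow> real \<Rightarrow> nat set" where
  "K1 \<mu> W \<zeta>u \<psi>u = {k \<in> {2..\<mu> * W + 1}. Re (chan \<zeta>u \<psi>u \<mu> k) > 0}"

definition Yint :: "nat \<Rightarrow> nat \<Rightarrow> real \<Rightarrow> real \<Rightarrow> real \<Rightarrow> real \<Rightarrow> real" where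
  "Yint \<mu> W \<zeta>u \<psi>u \<zeta>v \<psi>v = (\<Sum>k\<in>K1 \<mu> W \<zeta>u \<psi>u. Re (chan \<zeta>v \<psi>v \<mu> k))\<^sup>2"

end

theory Submission
  imports Defs
begin

lemma cos_per: "cos (x + 2*pi*real_of_int q) = cos x"
  by (simp add: cos_add)

lemma Re_chan: "\<zeta> \<ge> 0 \<Longrightarrow> Re (chan \<zeta> \<psi> \<mu> k) = sqrt \<zeta> * cos (\<psi> + 2 * pi * (real k - 1) / real \<mu>)"
  unfolding chan_def by (simp add: Re_exp)

lemma tele: "(\<Sum>i<L. 2 * sin (pi / real \<mu>) * cos (a + 2*pi*real i/real \<mu>))
   = sin (a + (2*real L - 1)*pi/real \<mu>) - sin (a - pi/real \<mu>)"
proof (induction L)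
  case 0 then show ?case by simp
next
  case (Suc L)
  have "2 * sin (pi / real \<mu>) * cos (a + 2*pi*real L/real \<mu>)
     = sin (a + (2*real L + 1)*pi/real \<mu>) - sin (a + (2*real L - 1)*pi/real \<mu>)"
  proof -
    have e1: "a + (2*real L + 1)*pi/real \<mu> = (a + 2*pi*real L/real \<mu>) + pi/real \<mu>"
      by (simp add: field_simps add_divide_distrib)
    have e2: "a + (2*real L - 1)*pi/real \<mu> = (a + 2*pi*real L/real \<mu>) - pi/real \<mu>"
      by (simp add: field_simps add_divide_distrib diff_divide_distrib)
    show ?thesis unfolding e1 e2 by (simp add: sin_add sin_diff)
  qed
  then show ?case using Suc by (simp add: field_simps)
qed

lemma shift_const:
  fixes g :: "int \<Rightarrow> real" and p :: nat
  assumes per: "\<And>m. g (m + int p) = g m"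
  shows "(\<Sum>i<p. g (a + int i)) = (\<Sum>i<p. g (int i))"
proof -
  define h where "h a = (\<Sum>i<p. g (a + int i))" for a
  have step: "h (b+1) = h b" for b
  proof (cases p)
    case 0 then show ?thesis by (simp add: h_def)
  next
    case (Suc n)
    have "h b = g b + (\<Sum>i<n. g (b + 1 + int i))"
      unfolding h_def Suc sum.lessThan_Suc_shift by (simp add: add.assoc)
    moreover have "h (b+1) = (\<Sum>i<n. g (b + 1 + int i)) + g (b + 1 + int n)"
      unfolding h_def Suc by simp
    moreover have "g (b + 1 + int n) = g b" using per[of b] Suc by (simp add: add_ac)
    ultimately show ?thesis by simp
  qed
  have "h a = h 0"
  proof (induction a rule: int_induct[where k=0])
    case base then show ?case by simp
  next
    case (step1 i) then show ?case using step by simp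
  next
    case (step2 i) then show ?case using step[of "i-1"] by simp
  qed
  then show ?thesis by (simp add: h_def)
qed

lemma sum_lt_add: "(\<Sum>j<m+(n::nat). f j) = (\<Sum>j<m. f j) + (\<Sum>i<n. f (m+i)::real)"
  by (induction n) auto

lemma multi:
  fixes g :: "int \<Rightarrow> real" and p :: nat
  assumes per: "\<And>m. g (m + int p) = g m"
  shows "(\<Sum>j<p*W. g (int j)) = real W * (\<Sum>i<p. g (int i))"
proof (induction W)
  case 0 then show ?case by simp
next
  case (Suc W)
  have per2: "g (m + int (p*c)) = g m" for m c
  proof (induction c)
    case 0 then show ?case by simp
  next
    case (Suc c)
    have "g (m + int (p * Suc c)) = g ((m + int (p*c)) + int p)" by (simp add: add_ac)
    then show ?case using per Suc by simp
  qed
  have "(\<Sum>j<p*Suc W. g (int j)) = (\<Sum>j<p*W + p. g (int j))" by (simp add: add.commute)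
  also have "\<dots> = (\<Sum>j<p*W. g (int j)) + (\<Sum>i<p. g (int (p*W + i)))"
    by (rule sum_lt_add)
  also have "(\<Sum>i<p. g (int (p*W + i))) = (\<Sum>i<p. g (int i))"
    using per2[of "int _" W] by (simp add: add.commute)
  finally show ?case using Suc by (simp add: algebra_simps)
qed

lemma cosK:
  fixes \<mu> :: nat and \<psi>u t :: real and n m :: int
  assumes mu: "\<mu> \<ge> 2" "even \<mu>" and t_def: "t = 3/4 - \<psi>u / (2 * pi)"
    and nint: "t * real \<mu> \<notin> \<int>" and n_def: "n = \<lceil>t * real \<mu>\<rceil>"
  shows "cos (\<psi>u + 2 * pi * real_of_int m / real \<mu>) > 0 \<longleftrightarrow> (m - n) mod int \<mu> < int (\<mu> div 2)"
proof -
  define r where "r = (m - n) mod int \<mu>"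
  define q where "q = (m - n) div int \<mu>"
  define \<delta> where "\<delta> = real_of_int n - t * real \<mu>"
  have mpos: "real \<mu> > 0" using mu by simp
  have r0: "0 \<le> r" and r1: "r < int \<mu>" using mu by (auto simp: r_def)
  have mrq: "m = n + r + int \<mu> * q" by (simp add: r_def q_def)
  have d0: "0 \<le> \<delta>" unfolding \<delta>_def n_def by (simp add: le_of_int_ceiling)
  have dne: "\<delta> \<noteq> 0" using nint unfolding \<delta>_def n_def
    by (metis Ints_of_int eq_iff_diff_eq_0)
  have d1: "\<delta> < 1" unfolding \<delta>_def n_def using ceiling_correct[of "t * real \<mu>"] by linarith
  have dpos: "\<delta> > 0" using d0 dne by simp
  define x where "x = 2 * pi * (real_of_int r + \<delta>) / real \<mu>"
  have ang: "\<psi>u + 2 * pi * real_of_int m / real \<mu> = (x - pi/2) + 2 * pi * real_of_int (q + 1)"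
  proof -
    have hp: "\<psi>u = 3 * pi / 2 - 2 * pi * t" using t_def by (simp add: field_simps)
    show ?thesis unfolding x_def mrq \<delta>_def hp using mpos
      by (simp add: field_simps)
  qed
  define y where "y = 2 * (real_of_int r + \<delta>) / real \<mu>"
  have xy: "x = pi * y" unfolding x_def y_def by simp
  have cx: "cos (\<psi>u + 2 * pi * real_of_int m / real \<mu>) = sin x"
    unfolding ang cos_per by (simp add: cos_diff)
  show ?thesis
  proof
    assume "0 < cos (\<psi>u + 2 * pi * real_of_int m / real \<mu>)"
    then have sx: "sin x > 0" using cx by simp
    show "(m - n) mod int \<mu> < int (\<mu> div 2)"
    proof (rule ccontr)
      assume "\<not> ?thesis"
      then have "r \<ge> int (\<mu> div 2)" by (simp add: r_def)
      then have "2 * real_of_int r \<ge> real \<mu>" using mu by (auto elim!: evenE)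
      then have "1 \<le> y" unfolding y_def using mpos dpos by (simp add: field_simps)
      then have "pi \<le> x" unfolding xy using mult_left_mono[of 1 y pi] by simp
      moreover have "y < 2" unfolding y_def using mpos d1 r1 by (simp add: field_simps)
      then have "x < 2 * pi" unfolding xy by simp
      ultimately have "sin x \<le> 0" by (rule sin_le_zero)
      with sx show False by simp
    qed
  next
    assume "(m - n) mod int \<mu> < int (\<mu> div 2)"
    then have "r + 1 \<le> int (\<mu> div 2)" by (simp add: r_def)
    then have "2 * (real_of_int r + 1) \<le> real \<mu>" using mu by (auto elim!: evenE)
    then have "y < 1" unfolding y_def using mpos d1 by (simp add: field_simps)
    then have "x < pi" unfolding xy by simp
    moreover have "0 < x" unfolding x_def using mpos dpos r0 by simp
    ultimately show "0 < cos (\<psi>u + 2 * pi * real_of_int m / real \<mu>)" using cx sin_gt_zero by simp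
  qed
qed

theorem theorem3:
  fixes W \<mu> :: nat and \<zeta>u \<psi>u \<zeta>v \<psi>v t V :: real
  assumes "W \<ge> 1" and "\<mu> \<ge> 2" and "even \<mu>"
    and "\<zeta>u > 0" and "0 < \<psi>u" and "\<psi>u < 2 * pi"
    and "\<zeta>v > 0"
    and t_def: "t = 3/4 - \<psi>u / (2 * pi)"
    and "t * real \<mu> \<notin> \<int>"
    and V_def: "V = sin (pi / real \<mu>) / real W"
  shows "Yint \<mu> W \<zeta>u \<psi>u \<zeta>v \<psi>v =
    \<zeta>v * (sin (\<psi>v - pi / real \<mu> + 2 * pi / real \<mu> * real_of_int \<lceil>t * real \<mu>\<rceil>))\<^sup>2 / V\<^sup>2"
proof -
  define n where "n = \<lceil>t * real \<mu>\<rceil>"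
  define h where "h = \<mu> div 2"
  have mpos: "real \<mu> > 0" using assms by simp
  have mh: "\<mu> = 2 * h" using assms by (simp add: h_def)
  define G where "G m = (if (m - n) mod int \<mu> < int h then sqrt \<zeta>v * cos (\<psi>v + 2 * pi * real_of_int m / real \<mu>) else 0)" for m
  have perG: "G (m + int \<mu>) = G m" for m
  proof -
    have "(m + int \<mu> - n) mod int \<mu> = (m - n) mod int \<mu>"
      by (metis add.commute add_diff_eq mod_add_self1)
    moreover have "\<psi>v + 2 * pi * real_of_int (m + int \<mu>) / real \<mu>
        = (\<psi>v + 2 * pi * real_of_int m / real \<mu>) + 2 * pi * real_of_int 1"
      using mpos by (simp add: field_simps)
    ultimately show ?thesis unfolding G_def by (simp only: cos_per)
  qed
  have K1eq: "K1 \<mu> W \<zeta>u \<psi>u = {k \<in> {2..\<mu> * W + 1}. (int k - 1 - n) mod int \<mu> < int h}"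
  proof -
    have "Re (chan \<zeta>u \<psi>u \<mu> k) > 0 \<longleftrightarrow> (int k - 1 - n) mod int \<mu> < int h" if "k \<ge> 2" for k
    proof -
      have "Re (chan \<zeta>u \<psi>u \<mu> k) = sqrt \<zeta>u * cos (\<psi>u + 2 * pi * real_of_int (int k - 1) / real \<mu>)"
        using assms that by (simp add: Re_chan)
      moreover have "sqrt \<zeta>u > 0" using assms by simp
      ultimately have "Re (chan \<zeta>u \<psi>u \<mu> k) > 0 \<longleftrightarrow> cos (\<psi>u + 2 * pi * real_of_int (int k - 1) / real \<mu>) > 0"
        by (simp add: zero_less_mult_iff)
      also have "\<dots> \<longleftrightarrow> (int k - 1 - n) mod int \<mu> < int h"
        using cosK[OF assms(2,3) t_def assms(9) n_def, of "int k - 1"] by (simp add: h_def)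
      finally show ?thesis .
    qed
    then show ?thesis unfolding K1_def by auto
  qed
  have S1: "(\<Sum>k\<in>K1 \<mu> W \<zeta>u \<psi>u. Re (chan \<zeta>v \<psi>v \<mu> k)) = (\<Sum>j<\<mu>*W. G (1 + int j))"
  proof -
    have "(\<Sum>k\<in>K1 \<mu> W \<zeta>u \<psi>u. Re (chan \<zeta>v \<psi>v \<mu> k))
       = (\<Sum>k\<in>{2..\<mu> * W + 1}. if (int k - 1 - n) mod int \<mu> < int h then Re (chan \<zeta>v \<psi>v \<mu> k) else 0)"
      unfolding K1eq by (rule sum.inter_filter) simp
    also have "\<dots> = (\<Sum>j<\<mu>*W. G (1 + int j))"
    proof (rule sum.reindex_bij_witness[where i="\<lambda>j. j + 2" and j="\<lambda>k. k - 2"])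
      fix k assume k: "k \<in> {2..\<mu> * W + 1}"
      have "Re (chan \<zeta>v \<psi>v \<mu> k) = sqrt \<zeta>v * cos (\<psi>v + 2 * pi * real_of_int (1 + int (k - 2)) / real \<mu>)"
        using assms k by (simp add: Re_chan of_nat_diff)
      moreover have "1 + int (k-2) - n = int k - 1 - n" using k by auto
      ultimately show "G (1 + int (k - 2)) = (if (int k - 1 - n) mod int \<mu> < int h then Re (chan \<zeta>v \<psi>v \<mu> k) else 0)"
        unfolding G_def by (simp only:)
    next
      fix k assume "k \<in> {2..\<mu> * W + 1}" then have "2 \<le> k" by simp then show "k - 2 + 2 = k" by linarith
    next
      fix k assume "k \<in> {2..\<mu> * W + 1}" then have "2 \<le> k" "k \<le> \<mu> * W + 1" by simp_all then show "k - 2 \<in> {..<\<mu> * W}" by simp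
    next
      fix j assume "j \<in> {..<\<mu> * W}" then show "j + 2 - 2 = j" by simp
    next
      fix j assume "j \<in> {..<\<mu> * W}" then show "j + 2 \<in> {2..\<mu> * W + 1}" by simp
    qed
    finally show ?thesis .
  qed
  have S2: "(\<Sum>j<\<mu>*W. G (1 + int j)) = real W * (\<Sum>i<\<mu>. G (1 + int i))"
  proof (rule multi[of "\<lambda>m. G (1 + m)" \<mu> W])
    fix m :: int
    show "G (1 + (m + int \<mu>)) = G (1 + m)" using perG[of "1 + m"] by (simp add: add.assoc)
  qed
  have S3: "(\<Sum>i<\<mu>. G (1 + int i)) = (\<Sum>i<\<mu>. G (n + int i))"
    using shift_const[of G \<mu> 1] shift_const[of G \<mu> n] perG by simp
  define a where "a = \<psi>v + 2 * pi * real_of_int n / real \<mu>"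
  have S4: "(\<Sum>i<\<mu>. G (n + int i)) = sqrt \<zeta>v * (\<Sum>i<h. cos (a + 2 * pi * real i / real \<mu>))"
  proof -
    have "(\<Sum>i<\<mu>. G (n + int i)) = (\<Sum>i<\<mu>. if i < h then sqrt \<zeta>v * cos (a + 2 * pi * real i / real \<mu>) else 0)"
    proof (rule sum.cong[OF refl])
      fix i assume i: "i \<in> {..<\<mu>}"
      have "(n + int i - n) mod int \<mu> = int i" using i by simp
      moreover have "\<psi>v + 2 * pi * real_of_int (n + int i) / real \<mu> = a + 2 * pi * real i / real \<mu>"
        unfolding a_def by (simp add: field_simps add_divide_distrib)
      ultimately show "G (n + int i) = (if i < h then sqrt \<zeta>v * cos (a + 2 * pi * real i / real \<mu>) else 0)"
        unfolding G_def by simp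
    qed
    also have "\<dots> = (\<Sum>i\<in>{i\<in>{..<\<mu>}. i < h}. sqrt \<zeta>v * cos (a + 2 * pi * real i / real \<mu>))"
      by (rule sum.inter_filter[symmetric]) simp
    also have "{i\<in>{..<\<mu>}. i < h} = {..<h}" using mh by auto
    finally show ?thesis by (simp add: sum_distrib_left)
  qed
  have sp: "sin (pi / real \<mu>) > 0" using assms mpos
    by (intro sin_gt_zero) (auto simp: field_simps)
  have S5: "(\<Sum>i<h. cos (a + 2 * pi * real i / real \<mu>)) = - sin (a - pi / real \<mu>) / sin (pi / real \<mu>)"
  proof -
    have "2 * sin (pi / real \<mu>) * (\<Sum>i<h. cos (a + 2 * pi * real i / real \<mu>))
       = sin (a + (2 * real h - 1) * pi / real \<mu>) - sin (a - pi / real \<mu>)"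
      using tele[where L=h and \<mu>=\<mu> and a=a] by (simp add: sum_distrib_left)
    also have "a + (2 * real h - 1) * pi / real \<mu> = (a - pi / real \<mu>) + pi"
      using mh mpos by (simp add: field_simps)
    also have "sin ((a - pi / real \<mu>) + pi) = - sin (a - pi / real \<mu>)" by simp
    finally show ?thesis using sp by (simp add: field_simps)
  qed
  have "Yint \<mu> W \<zeta>u \<psi>u \<zeta>v \<psi>v = (real W * (sqrt \<zeta>v * (- sin (a - pi / real \<mu>) / sin (pi / real \<mu>))))\<^sup>2"
    unfolding Yint_def S1 S2 S3 S4 S5 ..
  also have "\<dots> = \<zeta>v * (sin (a - pi / real \<mu>))\<^sup>2 / V\<^sup>2"
    using assms sp unfolding V_def by (simp add: field_simps power2_eq_square)
  also have "a - pi / real \<mu> = \<psi>v - pi / real \<mu> + 2 * pi / real \<mu> * real_of_int \<lceil>t * real \<mu>\<rceil>"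
    unfolding a_def n_def by simp
  finally show ?thesis .
qed

end
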